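(* Let $M=(m_{r,c})$ be the star matrix of a partition of the hypercube ${\bf Z}_q^n$ into subcubes all of the same dimension, let $i\ne j$ be two columns of $M$, and let $\pi$ be a permutation of ${\bf Z}_q$. Let $R$ be the set of all rows $r$ of $M$ such that both $m_{r,i}$ and $m_{r,j}$ belong to ${\bf Z}_q$. Then, as $r$ ranges over $R$, the value $(m_{r,i}+\pi(m_{r,j}))\bmod q$ takes each value of ${\bf Z}_q$ the same number of times.
   Context: A subcube of ${\bf Z}_q^n$ is obtained by fixing the values of some coordinates and letting the remaining coordinates run through all of ${\bf Z}_q$; its dimension is the number of free coordinates. Its star pattern is the vector of length $n$ over ${\bf Z}_q\cup\{*\}$ with the fixed value in each fixed coordinate and $*$ in each free coordinate. The star matrix of a partition of ${\bf Z}_q^n$ into subcubes (each vector lying in exactly one subcube) is the matrix whose rows are the star patterns of the subcubes of the partition. *)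

theory Defs
  imports Main
begin

text \<open>Star patterns are lists of length n over nat option: Some v is a fixed
  coordinate with value v < q, None is a free coordinate (star).\<close>

definition hypercube :: "nat \<Rightarrow> nat \<Rightarrow> nat list set" where
  "hypercube q n = {x. length x = n \<and> (\<forall>k<n. x ! k < q)}"

definition star_pattern :: "nat \<Rightarrow> nat \<Rightarrow> nat option list \<Rightarrow> bool" where
  "star_pattern q n p \<longleftrightarrow> length p = n \<and> (\<forall>k<n. \<forall>v. p ! k = Some v \<longrightarrow> v < q)"

definition subcube :: "nat \<Rightarrow> nat \<Rightarrow> nat option list \<Rightarrow> nat list set" where
  "subcube q n p = {x \<in> hypercube q n. \<forall>k<n. \<forall>v. p ! k = Some v \<longrightarrow> x ! k = v}"

definition subcube_dim :: "nat option list \<Rightarrow> nat" where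
  "subcube_dim p = card {k. k < length p \<and> p ! k = None}"

definition is_star_matrix_of_partition :: "nat \<Rightarrow> nat \<Rightarrow> nat option list set \<Rightarrow> bool" where
  "is_star_matrix_of_partition q n M \<longleftrightarrow>
     (\<forall>p\<in>M. star_pattern q n p) \<and>
     (\<forall>x\<in>hypercube q n. \<exists>!p. p \<in> M \<and> x \<in> subcube q n p)"

end

theory Submission
  imports Defs
begin


lemma lists_set_Suc:
  "{x. length x = Suc n \<and> (\<forall>k<Suc n. x!k \<in> S k)}
   = (\<lambda>(xs,y). xs@[y]) ` ({x. length x = n \<and> (\<forall>k<n. x!k \<in> S k)} \<times> S n)"
proof (intro equalityI subsetI)
  fix x assume x: "x \<in> {x. length x = Suc n \<and> (\<forall>k<Suc n. x!k \<in> S k)}"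
  then have ne: "x \<noteq> []" by auto
  then have e: "x = butlast x @ [last x]" by simp
  have b: "butlast x \<in> {x. length x = n \<and> (\<forall>k<n. x!k \<in> S k)}"
    using x by (auto simp: nth_butlast)
  have "last x = x ! n" using x ne by (simp add: last_conv_nth)
  then have l: "last x \<in> S n" using x by simp
  have "(butlast x, last x) \<in> {x. length x = n \<and> (\<forall>k<n. x!k \<in> S k)} \<times> S n"
    using b l by blast
  then show "x \<in> (\<lambda>(xs,y). xs@[y]) ` ({x. length x = n \<and> (\<forall>k<n. x!k \<in> S k)} \<times> S n)"
    using e by (metis (no_types, lifting) case_prod_conv image_eqI)
next
  fix x assume "x \<in> (\<lambda>(xs,y). xs@[y]) ` ({x. length x = n \<and> (\<forall>k<n. x!k \<in> S k)} \<times> S n)"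
  then obtain xs y where "x = xs@[y]" "length xs = n" "\<forall>k<n. xs!k \<in> S k" "y \<in> S n" by auto
  then show "x \<in> {x. length x = Suc n \<and> (\<forall>k<Suc n. x!k \<in> S k)}"
    by (auto simp: nth_append less_Suc_eq)
qed

lemma card_lists_prod:
  assumes "\<And>k. k<n \<Longrightarrow> finite (S k)"
  shows "finite {x. length x = n \<and> (\<forall>k<n. x!k \<in> S k)} \<and>
         card {x. length x = n \<and> (\<forall>k<n. x!k \<in> S k)} = (\<Prod>k<n. card (S k))"
  using assms
proof (induction n)
  case 0
  then show ?case by simp
next
  case (Suc n)
  let ?A = "{x. length x = n \<and> (\<forall>k<n. x!k \<in> S k)}"
  have IH: "finite ?A" "card ?A = (\<Prod>k<n. card (S k))" using Suc by auto
  have inj: "inj_on (\<lambda>(xs,y). xs@[y]) (?A \<times> S n)"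
    by (rule inj_onI) (clarsimp)
  have fin: "finite (S n)" using Suc by auto
  show ?case unfolding lists_set_Suc
  proof
    have "finite (?A \<times> S n)" using IH fin by simp
    then show "finite ((\<lambda>(xs,y). xs@[y]) ` (?A \<times> S n))" by (rule finite_imageI)
    have "card ((\<lambda>(xs,y). xs@[y]) ` (?A \<times> S n)) = card (?A \<times> S n)"
      by (rule card_image[OF inj])
    also have "\<dots> = card ?A * card (S n)" by (rule card_cartesian_product)
    finally show "card ((\<lambda>(xs,y). xs@[y]) ` (?A \<times> S n)) = (\<Prod>k<Suc n. card (S k))"
      using IH by simp
  qed
qed


definition Sp :: "nat \<Rightarrow> nat option list \<Rightarrow> nat \<Rightarrow> nat set" where
  "Sp q p k = (case p!k of None \<Rightarrow> {..<q} | Some v \<Rightarrow> {v})"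

lemma Sp_fin: "finite (Sp q p k)" by (auto simp: Sp_def split: option.splits)

lemma subcube_eq:
  assumes "star_pattern q n p"
  shows "subcube q n p = {x. length x = n \<and> (\<forall>k<n. x!k \<in> Sp q p k)}"
proof (intro equalityI subsetI)
  fix x assume x: "x \<in> subcube q n p"
  show "x \<in> {x. length x = n \<and> (\<forall>k<n. x!k \<in> Sp q p k)}"
  proof (simp, intro conjI allI impI)
    show "length x = n" using x by (simp add: subcube_def hypercube_def)
    fix k assume k: "k < n"
    show "x!k \<in> Sp q p k"
    proof (cases "p!k")
      case None then show ?thesis using x k by (simp add: Sp_def subcube_def hypercube_def)
    next
      case (Some v) then show ?thesis using x k by (simp add: Sp_def subcube_def)
    qed
  qed
next
  fix x assume x: "x \<in> {x. length x = n \<and> (\<forall>k<n. x!k \<in> Sp q p k)}"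
  have h: "x!k < q \<and> (\<forall>v. p!k = Some v \<longrightarrow> x!k = v)" if k: "k < n" for k
  proof (cases "p!k")
    case None then show ?thesis using x k by (auto simp: Sp_def)
  next
    case (Some v) then show ?thesis using x k assms by (auto simp: Sp_def star_pattern_def)
  qed
  show "x \<in> subcube q n p" using x h by (simp add: subcube_def hypercube_def)
qed

lemma card_subcube:
  assumes "star_pattern q n p"
  shows "card (subcube q n p) = q ^ subcube_dim p"
proof -
  have "card (subcube q n p) = (\<Prod>k<n. card (Sp q p k))"
    unfolding subcube_eq[OF assms] using card_lists_prod[of n "Sp q p"] Sp_fin by blast
  also have "\<dots> = (\<Prod>k<n. if p!k = None then q else 1)"
    by (rule prod.cong) (auto simp: Sp_def split: option.splits)
  also have "\<dots> = q ^ card {k. k < n \<and> p!k = None}"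
  proof -
    have "(\<Prod>k<n. if p!k = None then q else 1) = (\<Prod>k\<in>{..<n} \<inter> {k. p!k = None}. q) * (\<Prod>k\<in>{..<n} \<inter> - {k. p!k = None}. 1)"
      by (rule prod.If_cases) simp
    also have "\<dots> = q ^ card ({..<n} \<inter> {k. p!k = None})" by simp
    also have "{..<n} \<inter> {k. p!k = None} = {k. k < n \<and> p!k = None}" by auto
    finally show ?thesis .
  qed
  finally show ?thesis using assms by (simp add: subcube_dim_def star_pattern_def)
qed

definition G :: "nat \<Rightarrow> nat option \<Rightarrow> nat \<Rightarrow> int" where
  "G q ov a = int q * (if ov = Some a then 1 else 0) + (if ov = None then 1 else 0)"

lemma Sp_factor:
  assumes "a < q"
  shows "int q * int (card (Sp q p k \<inter> {a})) = G q (p!k) a * int (card (Sp q p k))"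
  using assms by (auto simp: Sp_def G_def split: option.splits)

lemma card_sub_ab:
  assumes "star_pattern q n p" "i < n" "j < n" "i \<noteq> j" "a < q" "b < q"
  shows "int q ^ 2 * int (card (subcube q n p \<inter> {x. x!i = a \<and> x!j = b}))
       = G q (p!i) a * G q (p!j) b * int (card (subcube q n p))"
proof -
  define S' where "S' k = (if k = i then Sp q p i \<inter> {a} else if k = j then Sp q p j \<inter> {b} else Sp q p k)" for k
  have fin': "finite (S' k)" for k using Sp_fin by (simp add: S'_def)
  have eq: "subcube q n p \<inter> {x. x!i = a \<and> x!j = b} = {x. length x = n \<and> (\<forall>k<n. x!k \<in> S' k)}"
  proof (intro equalityI subsetI)
    fix x assume x: "x \<in> subcube q n p \<inter> {x. x!i = a \<and> x!j = b}"
    then have x1: "length x = n" "\<And>k. k<n \<Longrightarrow> x!k \<in> Sp q p k" "x!i = a" "x!j = b"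
      unfolding subcube_eq[OF assms(1)] by auto
    have "x!k \<in> S' k" if "k<n" for k
      using x1(2)[OF that] x1(2)[of i] x1(2)[of j] x1(3,4) assms(2,3) that by (simp add: S'_def)
    then show "x \<in> {x. length x = n \<and> (\<forall>k<n. x!k \<in> S' k)}" using x1 by simp
  next
    fix x assume x: "x \<in> {x. length x = n \<and> (\<forall>k<n. x!k \<in> S' k)}"
    have x1: "length x = n" "\<And>k. k<n \<Longrightarrow> x!k \<in> S' k" using x by auto
    have a: "x!k \<in> Sp q p k" if "k<n" for k using x1(2)[OF that]
      by (auto simp: S'_def split: if_splits)
    have "x!i \<in> S' i" "x!j \<in> S' j" using x1(2) assms(2,3) by auto
    then have b: "x!i = a" "x!j = b" using assms(4) by (auto simp: S'_def)
    show "x \<in> subcube q n p \<inter> {x. x!i = a \<and> x!j = b}"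
      unfolding subcube_eq[OF assms(1)] using x1(1) a b by blast
  qed
  have c1: "card (subcube q n p \<inter> {x. x!i = a \<and> x!j = b}) = (\<Prod>k<n. card (S' k))"
    unfolding eq using card_lists_prod[of n S'] fin' by auto
  have c2: "card (subcube q n p) = (\<Prod>k<n. card (Sp q p k))"
    using subcube_eq[OF assms(1)] card_lists_prod[of n "Sp q p"] Sp_fin by auto
  have ij: "i \<in> {..<n}" "j \<in> {..<n} - {i}" using assms by auto
  have p1: "(\<Prod>k<n. f k) = f i * f j * (\<Prod>k\<in>{..<n} - {i} - {j}. f k)" for f :: "nat \<Rightarrow> nat"
    using prod.remove[OF _ ij(1), of f] prod.remove[OF _ ij(2), of f] by auto
  have p3: "(\<Prod>k\<in>{..<n} - {i} - {j}. card (S' k)) = (\<Prod>k\<in>{..<n} - {i} - {j}. card (Sp q p k))"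
    by (rule prod.cong) (auto simp: S'_def)
  have si: "S' i = Sp q p i \<inter> {a}" and sj: "S' j = Sp q p j \<inter> {b}"
    using assms(4) by (auto simp: S'_def)
  define R where "R = (\<Prod>k\<in>{..<n} - {i} - {j}. card (Sp q p k))"
  have "int q ^ 2 * int (card (subcube q n p \<inter> {x. x!i = a \<and> x!j = b}))
     = int q ^ 2 * (int (card (Sp q p i \<inter> {a})) * int (card (Sp q p j \<inter> {b})) * int R)"
    unfolding c1 p1[of "\<lambda>k. card (S' k)"] p3 si sj R_def by simp
  also have "\<dots> = (int q * int (card (Sp q p i \<inter> {a}))) * (int q * int (card (Sp q p j \<inter> {b}))) * int R"
    by (simp only: power2_eq_square) algebra
  also have "\<dots> = (G q (p!i) a * int (card (Sp q p i))) * (G q (p!j) b * int (card (Sp q p j))) * int R"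
    unfolding Sp_factor[OF assms(5)] Sp_factor[OF assms(6)] by (rule refl)
  also have "\<dots> = G q (p!i) a * G q (p!j) b * (int (card (Sp q p i)) * int (card (Sp q p j)) * int R)"
    by algebra
  also have "\<dots> = G q (p!i) a * G q (p!j) b * int (card (subcube q n p))"
    unfolding c2 p1[of "\<lambda>k. card (Sp q p k)"] R_def by simp
  finally show ?thesis .
qed

lemma shift_count:
  fixes q y c :: nat
  assumes "0 < q" "c < q"
  shows "(\<Sum>a<q. (if (a + y) mod q = c then 1 else 0 :: int)) = 1"
proof -
  have inj: "inj_on (\<lambda>a. (a + y) mod q) {..<q}"
  proof (rule inj_onI)
    fix a a' assume "a \<in> {..<q}" "a' \<in> {..<q}" "(a + y) mod q = (a' + y) mod q"
    then show "a = a'"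
    proof -
      have h: "(int a + int y) mod int q = (int a' + int y) mod int q"
        using \<open>(a + y) mod q = (a' + y) mod q\<close> by (metis of_nat_add of_nat_mod)
      have "int a = int a mod int q" using \<open>a \<in> {..<q}\<close> by simp
      also have "\<dots> = ((int a + int y) - int y) mod int q" by simp
      also have "\<dots> = ((int a + int y) mod int q - int y) mod int q" by (simp add: mod_diff_left_eq)
      also have "\<dots> = ((int a' + int y) mod int q - int y) mod int q" using h by simp
      also have "\<dots> = ((int a' + int y) - int y) mod int q" by (simp add: mod_diff_left_eq)
      also have "\<dots> = int a'" using \<open>a' \<in> {..<q}\<close> by simp
      finally show ?thesis by simp
    qed
  qed
  have "(\<lambda>a. (a + y) mod q) ` {..<q} = {..<q}"
    by (rule endo_inj_surj) (use inj assms in auto)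
  then have bij: "bij_betw (\<lambda>a. (a + y) mod q) {..<q} {..<q}" using inj by (simp add: bij_betw_def)
  have "(\<Sum>a<q. (if (a + y) mod q = c then 1 else 0 :: int)) = (\<Sum>z<q. (if z = c then 1 else 0 :: int))"
    using sum.reindex_bij_betw[OF bij, of "\<lambda>z. if z = c then 1 else 0 :: int"] by simp
  also have "\<dots> = 1" using assms by simp
  finally show ?thesis .
qed



lemma sum_ind:
  fixes F :: "nat \<Rightarrow> int"
  assumes "finite A"
  shows "(\<Sum>a\<in>A. (if x = Some a then 1 else 0) * F a) = (case x of Some a0 \<Rightarrow> if a0 \<in> A then F a0 else 0 | None \<Rightarrow> 0)"
proof (cases x)
  case None then show ?thesis by simp
next
  case (Some a0)
  have "(\<Sum>a\<in>A. (if x = Some a then 1 else 0) * F a) = (\<Sum>a\<in>A. if a0 = a then F a else 0)"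
    using Some by (intro sum.cong) auto
  also have "\<dots> = (if a0 \<in> A then F a0 else 0)" using assms by (simp add: sum.delta)
  finally show ?thesis using Some by simp
qed

lemma finite_M:
  assumes "\<forall>p\<in>M. star_pattern q n p"
  shows "finite M"
proof -
  have "M \<subseteq> {xs. set xs \<subseteq> insert None (Some ` {..<q}) \<and> length xs = n}"
  proof
    fix p assume "p \<in> M"
    then have sp: "star_pattern q n p" using assms by blast
    have "set p \<subseteq> insert None (Some ` {..<q})"
    proof
      fix z assume "z \<in> set p"
      then obtain k where k: "k < length p" "p!k = z" by (auto simp: in_set_conv_nth)
      then show "z \<in> insert None (Some ` {..<q})" using sp
        by (cases z) (auto simp: star_pattern_def)
    qed
    then show "p \<in> {xs. set xs \<subseteq> insert None (Some ` {..<q}) \<and> length xs = n}"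
      using sp by (simp add: star_pattern_def)
  qed
  moreover have "finite {xs. set xs \<subseteq> insert None (Some ` {..<q}) \<and> length xs = n}"
    by (rule finite_lists_length_eq) simp
  ultimately show ?thesis by (rule finite_subset)
qed

lemma hyper_sub: "subcube q n (replicate n None) = hypercube q n"
  by (auto simp: subcube_def)

lemma star_None: "star_pattern q n (replicate n None)"
  by (simp add: star_pattern_def)

lemma card_hyper: "card (hypercube q n) = q ^ n"
proof -
  have "card (hypercube q n) = q ^ subcube_dim (replicate n (None :: nat option))"
    using card_subcube[OF star_None[of q n]] hyper_sub by simp
  moreover have "{k. k < n \<and> replicate n None ! k = (None :: nat option)} = {..<n}" by auto
  then have "subcube_dim (replicate n (None :: nat option)) = n"
    by (simp add: subcube_dim_def)
  ultimately show ?thesis by simp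
qed



theorem lemma3:
  fixes q n :: nat and M :: "nat option list set" and i j :: nat and \<pi> :: "nat \<Rightarrow> nat"
  assumes "0 < q"
    and "is_star_matrix_of_partition q n M"
    and "\<exists>d. \<forall>p\<in>M. subcube_dim p = d"
    and "i < n" and "j < n" and "i \<noteq> j"
    and "bij_betw \<pi> {..<q} {..<q}"
  defines "R \<equiv> {r \<in> M. r ! i \<noteq> None \<and> r ! j \<noteq> None}"
  shows "\<forall>a<q. \<forall>b<q.
           card {r \<in> R. (the (r ! i) + \<pi> (the (r ! j))) mod q = a}
         = card {r \<in> R. (the (r ! i) + \<pi> (the (r ! j))) mod q = b}"
proof -
  have spM: "\<forall>p\<in>M. star_pattern q n p"
    and part: "\<forall>x\<in>hypercube q n. \<exists>!p. p \<in> M \<and> x \<in> subcube q n p"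
    using assms(2) by (simp_all add: is_star_matrix_of_partition_def)
  have finM: "finite M" using finite_M[OF spM] .
  obtain d where d: "\<forall>p\<in>M. subcube_dim p = d" using assms(3) by blast
  have cs: "card (subcube q n p) = q ^ d" if "p \<in> M" for p
    using card_subcube[of q n p] spM d that by auto
  have finH: "finite (hypercube q n)"
    using card_hyper[of q n] assms(1) by (metis card_ge_0_finite zero_less_power)
  define X where "X a b = {x::nat list. x!i = a \<and> x!j = b}" for a b
  define T where "T a b = (\<Sum>p\<in>M. G q (p!i) a * G q (p!j) b)" for a b
  have T: "int q ^ d * T a b = int q ^ n" if ab: "a < q" "b < q" for a b
  proof -
    have un: "hypercube q n \<inter> X a b = (\<Union>p\<in>M. subcube q n p \<inter> X a b)"
    proof (intro equalityI subsetI)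
      fix x assume x: "x \<in> hypercube q n \<inter> X a b"
      then obtain p where "p \<in> M" "x \<in> subcube q n p" using part by blast
      then show "x \<in> (\<Union>p\<in>M. subcube q n p \<inter> X a b)" using x by blast
    next
      fix x assume "x \<in> (\<Union>p\<in>M. subcube q n p \<inter> X a b)"
      then show "x \<in> hypercube q n \<inter> X a b" by (auto simp: subcube_def)
    qed
    have disj: "(subcube q n p \<inter> X a b) \<inter> (subcube q n p' \<inter> X a b) = {}"
      if "p \<in> M" "p' \<in> M" "p \<noteq> p'" for p p'
    proof (rule ccontr)
      assume "(subcube q n p \<inter> X a b) \<inter> (subcube q n p' \<inter> X a b) \<noteq> {}"
      then obtain x where x: "x \<in> subcube q n p" "x \<in> subcube q n p'" by blast
      then have "x \<in> hypercube q n" by (simp add: subcube_def)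
      then show False using part x that by blast
    qed
    have finsub: "finite (subcube q n p \<inter> X a b)" for p
      using finH by (rule finite_subset[rotated]) (auto simp: subcube_def)
    have "card (hypercube q n \<inter> X a b) = (\<Sum>p\<in>M. card (subcube q n p \<inter> X a b))"
      unfolding un by (rule card_UN_disjoint[OF finM]) (use finsub disj in auto)
    then have "int q ^ 2 * int (card (hypercube q n \<inter> X a b))
        = (\<Sum>p\<in>M. int q ^ 2 * int (card (subcube q n p \<inter> X a b)))"
      by (simp add: sum_distrib_left)
    also have "\<dots> = (\<Sum>p\<in>M. G q (p!i) a * G q (p!j) b * int q ^ d)"
    proof (rule sum.cong[OF refl])
      fix p assume p: "p \<in> M"
      show "int q ^ 2 * int (card (subcube q n p \<inter> X a b)) = G q (p!i) a * G q (p!j) b * int q ^ d"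
        using card_sub_ab[of q n p i j a b] spM p assms(4,5,6) ab cs[OF p] by (simp add: X_def)
    qed
    also have "\<dots> = int q ^ d * T a b" by (simp add: T_def sum_distrib_left mult_ac)
    finally have e1: "int q ^ 2 * int (card (hypercube q n \<inter> X a b)) = int q ^ d * T a b" .
    have "int q ^ 2 * int (card (hypercube q n \<inter> X a b)) = int q ^ n"
      using card_sub_ab[OF star_None[of q n] assms(4,5,6) ab] hyper_sub[of q n] card_hyper[of q n] assms(4,5)
      by (simp add: X_def G_def)
    then show ?thesis using e1 by simp
  qed
  have Tc: "T a b = T 0 0" if "a < q" "b < q" for a b
  proof -
    have "int q ^ d * T a b = int q ^ d * T 0 0" using T[OF that] T[of 0 0] assms(1) by simp
    moreover have "int q ^ d \<noteq> 0" using assms(1) by simp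
    ultimately show ?thesis using mult_left_cancel by blast
  qed
  define Ind where "Ind ov a = (if ov = Some a then 1 else (0::int))" for ov :: "nat option" and a
  define Nn where "Nn ov = (if ov = None then 1 else (0::int))" for ov :: "nat option"
  define h where "h a b = (\<Sum>p\<in>M. Ind (p!i) a * Ind (p!j) b)" for a b
  define \<alpha> where "\<alpha> a = (\<Sum>p\<in>M. Ind (p!i) a * Nn (p!j))" for a
  define \<beta> where "\<beta> b = (\<Sum>p\<in>M. Nn (p!i) * Ind (p!j) b)" for b
  define C where "C = (\<Sum>p\<in>M. Nn (p!i) * Nn (p!j))"
  have TE: "T a b = int q ^ 2 * h a b + int q * \<alpha> a + int q * \<beta> b + C" for a b
  proof -
    have "T a b = (\<Sum>p\<in>M. int q ^ 2 * (Ind (p!i) a * Ind (p!j) b) + int q * (Ind (p!i) a * Nn (p!j))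
                    + int q * (Nn (p!i) * Ind (p!j) b) + Nn (p!i) * Nn (p!j))"
      unfolding T_def
    proof (rule sum.cong[OF refl])
      fix p
      show "G q (p!i) a * G q (p!j) b = int q ^ 2 * (Ind (p!i) a * Ind (p!j) b) + int q * (Ind (p!i) a * Nn (p!j))
                    + int q * (Nn (p!i) * Ind (p!j) b) + Nn (p!i) * Nn (p!j)"
        unfolding G_def Ind_def[symmetric] Nn_def[symmetric] by (simp add: power2_eq_square algebra_simps)
    qed
    also have "\<dots> = int q ^ 2 * h a b + int q * \<alpha> a + int q * \<beta> b + C"
      by (simp add: sum.distrib sum_distrib_left h_def \<alpha>_def \<beta>_def C_def)
    finally show ?thesis .
  qed
  have hE: "int q ^ 2 * h a b = (T 0 0 - C) - int q * \<alpha> a - int q * \<beta> b" if "a < q" "b < q" for a b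
    using TE[of a b] Tc[OF that] by simp
  define K where "K = int q * (T 0 0 - C) - int q * (\<Sum>a<q. \<alpha> a) - int q * (\<Sum>b<q. \<beta> b)"
  have key: "int q ^ 2 * int (card {r \<in> R. (the (r ! i) + \<pi> (the (r ! j))) mod q = c}) = K"
    if c: "c < q" for c
  proof -
    define ind where "ind a b = (if (a + \<pi> b) mod q = c then 1 else (0::int))" for a b
    have colsum: "(\<Sum>a<q. ind a b) = 1" for b
      unfolding ind_def by (rule shift_count[OF assms(1) c])
    have rowsum: "(\<Sum>b<q. ind a b) = 1" for a
    proof -
      have "(\<Sum>b<q. ind a b) = (\<Sum>z<q. (if (z + a) mod q = c then 1 else (0::int)))"
        using sum.reindex_bij_betw[OF assms(7), of "\<lambda>z. (if (z + a) mod q = c then 1 else (0::int))"]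
        by (simp add: ind_def add.commute)
      also have "\<dots> = 1" by (rule shift_count[OF assms(1) c])
      finally show ?thesis .
    qed
    have cnt: "int (card {r \<in> R. (the (r ! i) + \<pi> (the (r ! j))) mod q = c}) = (\<Sum>a<q. \<Sum>b<q. ind a b * h a b)"
    proof -
      let ?E = "\<lambda>r. (the (r ! i) + \<pi> (the (r ! j))) mod q"
      let ?Q = "\<lambda>p. p ! i \<noteq> None \<and> p ! j \<noteq> None \<and> ?E p = c"
      have s1: "{r \<in> R. ?E r = c} = {p \<in> M. ?Q p}" by (auto simp: R_def)
      have "int (card {p \<in> M. ?Q p}) = (\<Sum>p\<in>{p \<in> M. ?Q p}. 1::int)" by simp
      also have "\<dots> = (\<Sum>p\<in>M. if ?Q p then 1 else 0)" by (rule sum.inter_filter[OF finM])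
      also have "\<dots> = (\<Sum>p\<in>M. \<Sum>a<q. Ind (p!i) a * (\<Sum>b<q. Ind (p!j) b * ind a b))"
      proof (rule sum.cong[OF refl])
        fix p assume p: "p \<in> M"
        have inner: "(\<Sum>b<q. Ind (p!j) b * ind a b) = (case p!j of Some b0 \<Rightarrow> if b0 \<in> {..<q} then ind a b0 else 0 | None \<Rightarrow> 0)" for a
          unfolding Ind_def by (rule sum_ind) simp
        have outer: "(\<Sum>a<q. Ind (p!i) a * (\<Sum>b<q. Ind (p!j) b * ind a b))
            = (case p!i of Some a0 \<Rightarrow> if a0 \<in> {..<q} then (\<Sum>b<q. Ind (p!j) b * ind a0 b) else 0 | None \<Rightarrow> 0)"
          unfolding Ind_def by (rule sum_ind) simp
        have sp: "star_pattern q n p" using spM p by blast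
        show "(if ?Q p then 1 else 0) = (\<Sum>a<q. Ind (p!i) a * (\<Sum>b<q. Ind (p!j) b * ind a b))"
        proof (cases "p!i")
          case None then show ?thesis unfolding outer by simp
        next
          case (Some a0)
          have a0: "a0 < q" using sp Some assms(4) by (simp add: star_pattern_def)
          show ?thesis
          proof (cases "p!j")
            case None then show ?thesis unfolding outer unfolding inner using Some by simp
          next
            case (Some b0)
            have b0: "b0 < q" using sp Some assms(5) by (simp add: star_pattern_def)
            show ?thesis unfolding outer unfolding inner using Some \<open>p!i = Some a0\<close> a0 b0 by (simp add: ind_def)
          qed
        qed
      qed
      also have "\<dots> = (\<Sum>p\<in>M. \<Sum>a<q. \<Sum>b<q. ind a b * (Ind (p!i) a * Ind (p!j) b))"
        by (simp add: sum_distrib_left mult_ac)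
      also have "\<dots> = (\<Sum>a<q. \<Sum>p\<in>M. \<Sum>b<q. ind a b * (Ind (p!i) a * Ind (p!j) b))"
        by (rule sum.swap)
      also have "\<dots> = (\<Sum>a<q. \<Sum>b<q. \<Sum>p\<in>M. ind a b * (Ind (p!i) a * Ind (p!j) b))"
        by (rule sum.cong[OF refl]) (rule sum.swap)
      also have "\<dots> = (\<Sum>a<q. \<Sum>b<q. ind a b * h a b)"
        by (simp add: h_def sum_distrib_left)
      finally show ?thesis unfolding s1 .
    qed
    have "int q ^ 2 * int (card {r \<in> R. (the (r ! i) + \<pi> (the (r ! j))) mod q = c})
        = (\<Sum>a<q. \<Sum>b<q. ind a b * (int q ^ 2 * h a b))"
      unfolding cnt by (simp add: sum_distrib_left mult_ac)
    also have "\<dots> = (\<Sum>a<q. \<Sum>b<q. ind a b * ((T 0 0 - C) - int q * \<alpha> a - int q * \<beta> b))"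
      by (intro sum.cong refl) (simp add: hE)
    also have "\<dots> = (\<Sum>a<q. \<Sum>b<q. ind a b * (T 0 0 - C)) - (\<Sum>a<q. \<Sum>b<q. ind a b * (int q * \<alpha> a))
                     - (\<Sum>a<q. \<Sum>b<q. ind a b * (int q * \<beta> b))"
      by (simp only: right_diff_distrib sum_subtractf)
    also have "(\<Sum>a<q. \<Sum>b<q. ind a b * (T 0 0 - C)) = (\<Sum>a<q. (\<Sum>b<q. ind a b) * (T 0 0 - C))"
      by (simp only: sum_distrib_right)
    also have "\<dots> = int q * (T 0 0 - C)" by (simp add: rowsum)
    also have "(\<Sum>a<q. \<Sum>b<q. ind a b * (int q * \<alpha> a)) = (\<Sum>a<q. (\<Sum>b<q. ind a b) * (int q * \<alpha> a))"
      by (simp only: sum_distrib_right)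
    also have "\<dots> = int q * (\<Sum>a<q. \<alpha> a)" by (simp add: rowsum sum_distrib_left)
    also have "(\<Sum>a<q. \<Sum>b<q. ind a b * (int q * \<beta> b)) = (\<Sum>b<q. \<Sum>a<q. ind a b * (int q * \<beta> b))"
      by (rule sum.swap)
    also have "\<dots> = (\<Sum>b<q. (\<Sum>a<q. ind a b) * (int q * \<beta> b))"
      by (simp only: sum_distrib_right)
    also have "\<dots> = int q * (\<Sum>b<q. \<beta> b)" by (simp add: colsum sum_distrib_left)
    finally show ?thesis unfolding K_def .
  qed
  show ?thesis
  proof (intro allI impI)
    fix a b assume ab: "a < q" "b < q"
    have "int q ^ 2 * int (card {r \<in> R. (the (r ! i) + \<pi> (the (r ! j))) mod q = a})
        = int q ^ 2 * int (card {r \<in> R. (the (r ! i) + \<pi> (the (r ! j))) mod q = b})"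
      using key[OF ab(1)] key[OF ab(2)] by simp
    moreover have "int q ^ 2 \<noteq> 0" using assms(1) by simp
    ultimately have "int (card {r \<in> R. (the (r ! i) + \<pi> (the (r ! j))) mod q = a})
        = int (card {r \<in> R. (the (r ! i) + \<pi> (the (r ! j))) mod q = b})"
      using mult_left_cancel by blast
    then show "card {r \<in> R. (the (r ! i) + \<pi> (the (r ! j))) mod q = a}
        = card {r \<in> R. (the (r ! i) + \<pi> (the (r ! j))) mod q = b}"
      by simp
  qed
qed
end
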